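(* Let $\mathbb{F}$ be a finite field with $q$ elements, let $T,n,r$ be positive integers, and let $X$ be a uniformly random matrix in $\mathbb{F}^{T\times n}$. If $r^n\cdot q^{\binom{r+T}{r}-n}\ge1$, then $$\mathbb{E}[\operatorname{rank}(X^r)]\ge n\left(1-\frac{\ln r}{\ln q}\right)-\frac{1}{\ln q}.$$
   Context: For $X\in\mathbb{F}^{T\times n}$, $X^r\in\mathbb{F}^{\binom{r+T}{r}\times n}$ is the matrix whose rows are all coordinatewise products of at most $r$ rows of $X$, products with repeated rows included (one row for each multiset of at most $r$ row indices, the empty product being the all-ones row); i.e., the matrix of all monomials of total degree at most $r$ in the rows of $X$. *)

theory Defs
  imports "Jordan_Normal_Form.DL_Rank" "HOL-Library.Multiset" "HOL-Library.Cardinality"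
begin

text \<open>Index set of the rows of X^r: multisets of at most r row indices of X (rows 0..<T).\<close>
definition monomial_idx :: "nat \<Rightarrow> nat \<Rightarrow> nat multiset set" where
  "monomial_idx T r = {M. set_mset M \<subseteq> {0..<T} \<and> size M \<le> r}"

text \<open>An (arbitrary) enumeration of those multisets, each exactly once; the rank does not
  depend on the order of the rows.\<close>
definition monomial_list :: "nat \<Rightarrow> nat \<Rightarrow> nat multiset list" where
  "monomial_list T r = (SOME xs. distinct xs \<and> set xs = monomial_idx T r)"

text \<open>X^r: one row per multiset M, entry in column j = product over M (with multiplicity)
  of the entries X(i,j); the empty multiset gives the all-ones row.\<close>
definition mono_power :: "'a::comm_ring_1 mat \<Rightarrow> nat \<Rightarrow> 'a mat" where
  "mono_power X r = mat_of_rows (dim_col X)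
     (map (\<lambda>M. vec (dim_col X) (\<lambda>j. \<Prod>i\<in>#M. X $$ (i, j))) (monomial_list (dim_row X) r))"

definition mat_rank :: "'a::field mat \<Rightarrow> nat" where
  "mat_rank A = vec_space.rank (dim_row A) A"

end

theory Submission
  imports Defs "HOL-Computational_Algebra.Polynomial"
begin

definition ev :: "nat multiset \<Rightarrow> 'a::comm_ring_1 list \<Rightarrow> 'a" where
  "ev M xs = (\<Prod>i\<in>#M. xs ! i)"

lemma ev_snoc:
  assumes "set_mset M \<subseteq> {0..<Suc T}" "length ys = T"
  shows "ev M (ys @ [t]) = ev (filter_mset (\<lambda>j. j < T) M) ys * t ^ count M T"
  using assms(1)
proof (induction M)
  case empty
  then show ?case by (simp add: ev_def)
next
  case (add x M)
  then have x: "x < Suc T" and M: "set_mset M \<subseteq> {0..<Suc T}" by auto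
  show ?case
  proof (cases "x < T")
    case True
    then show ?thesis using add.IH[OF M] assms(2) by (simp add: ev_def nth_append mult_ac)
  next
    case False
    then have "x = T" using x by simp
    then show ?thesis using add.IH[OF M] assms(2) by (simp add: ev_def nth_append mult_ac)
  qed
qed

lemma mset_decomp:
  assumes "set_mset M \<subseteq> {0..<Suc T}"
  shows "M = filter_mset (\<lambda>j. j < T) M + replicate_mset (count M T) T"
proof -
  have "filter_mset (\<lambda>j. \<not> j < T) M = replicate_mset (count M T) T"
  proof (subst multiset_eq_iff, intro allI)
    fix x show "count (filter_mset (\<lambda>j. \<not> j < T) M) x = count (replicate_mset (count M T) T) x"
      using assms by (cases "x = T") (auto simp: not_in_iff[symmetric] count_eq_zero_iff)
  qed
  then show ?thesis by (metis multiset_partition)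
qed

lemma SZ:
  fixes cf :: "'i \<Rightarrow> 'a::{finite,field}"
  assumes "finite I" "inj_on g I" "\<forall>i\<in>I. set_mset (g i) \<subseteq> {0..<T} \<and> size (g i) \<le> d"
    "i0 \<in> I" "cf i0 \<noteq> 0"
  shows "card {xs. length xs = T \<and> (\<Sum>i\<in>I. cf i * ev (g i) xs) = 0} * CARD('a) \<le> d * CARD('a) ^ T"
  using assms
proof (induction T arbitrary: I g cf d i0)
  case 0
  then have g0: "\<forall>i\<in>I. g i = {#}" by auto
  have "i = i0" if "i \<in> I" for i using inj_onD[OF 0(2), of i i0] g0 that 0(4) by simp
  then have "I = {i0}" using 0(4) by blast
  then have "(\<Sum>i\<in>I. cf i * ev (g i) xs) \<noteq> 0" for xs using g0 0(5) by (simp add: ev_def)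
  then show ?case by simp
next
  case (Suc T)
  define q where "q = CARD('a)"
  define f where "f xs = (\<Sum>i\<in>I. cf i * ev (g i) xs)" for xs
  define K where "K = {count (g i) T | i. i \<in> I \<and> cf i \<noteq> 0}"
  have finK: "finite K" unfolding K_def using Suc(2) by simp
  have K0: "count (g i0) T \<in> K" unfolding K_def using Suc(5,6) by blast
  define k0 where "k0 = Max K"
  have k0K: "k0 \<in> K" unfolding k0_def using finK K0 by (intro Max_in) auto
  have k0max: "\<And>i. i \<in> I \<Longrightarrow> cf i \<noteq> 0 \<Longrightarrow> count (g i) T \<le> k0"
    unfolding k0_def using finK by (intro Max_ge) (auto simp: K_def)
  obtain i1 where i1: "i1 \<in> I" "cf i1 \<noteq> 0" "count (g i1) T = k0" using k0K unfolding K_def by blast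
  define I' where "I' = {i\<in>I. count (g i) T = k0}"
  define g' where "g' i = filter_mset (\<lambda>j. j < T) (g i)" for i
  have dec: "g i = g' i + replicate_mset (count (g i) T) T" if "i \<in> I" for i
    unfolding g'_def using Suc(4) that by (intro mset_decomp) auto
  have "k0 \<le> d"
  proof -
    have "count (g i1) T \<le> size (g i1)" by (simp add: count_le_size)
    then show ?thesis using i1 Suc(4) by auto
  qed
  have IH: "card {ys. length ys = T \<and> (\<Sum>i\<in>I'. cf i * ev (g' i) ys) = 0} * q \<le> (d - k0) * q ^ T"
    unfolding q_def
  proof (rule Suc.IH)
    show "finite I'" using Suc(2) unfolding I'_def by simp
    show "inj_on g' I'"
    proof (rule inj_onI)
      fix i j assume "i \<in> I'" "j \<in> I'" "g' i = g' j"
      moreover have "i \<in> I" "j \<in> I" "count (g i) T = k0" "count (g j) T = k0"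
        using \<open>i \<in> I'\<close> \<open>j \<in> I'\<close> unfolding I'_def by auto
      ultimately have "g i = g j" using dec[of i] dec[of j] by simp
      then show "i = j" using inj_onD[OF Suc(3)] \<open>i \<in> I\<close> \<open>j \<in> I\<close> by blast
    qed
    show "\<forall>i\<in>I'. set_mset (g' i) \<subseteq> {0..<T} \<and> size (g' i) \<le> d - k0"
    proof
      fix i assume i: "i \<in> I'"
      then have "size (g i) = size (g' i) + k0" using dec[of i] unfolding I'_def
        by (metis (mono_tags, lifting) mem_Collect_eq size_replicate_mset size_union)
      then show "set_mset (g' i) \<subseteq> {0..<T} \<and> size (g' i) \<le> d - k0"
        using Suc(4) i unfolding I'_def g'_def by auto
    qed
    show "i1 \<in> I'" using i1 unfolding I'_def by simp
    show "cf i1 \<noteq> 0" by fact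
  qed
  define G where "G ys = (\<Sum>i\<in>I'. cf i * ev (g' i) ys)" for ys
  have roots: "card {t. f (ys @ [t]) = 0} \<le> (if G ys = 0 then q else k0)" if ys: "length ys = T" for ys
  proof (cases "G ys = 0")
    case True
    then show ?thesis unfolding q_def by (simp add: card_mono)
  next
    case False
    define p where "p = (\<Sum>i\<in>I. monom (cf i * ev (g' i) ys) (count (g i) T))"
    have ev: "poly p t = f (ys @ [t])" for t
      unfolding p_def f_def poly_sum poly_monom
    proof (intro sum.cong refl)
      fix i assume "i \<in> I"
      then have "ev (g i) (ys @ [t]) = ev (g' i) ys * t ^ count (g i) T"
        unfolding g'_def using ev_snoc[OF _ ys] Suc(4) by blast
      then show "cf i * ev (g' i) ys * t ^ count (g i) T = cf i * ev (g i) (ys @ [t])"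
        by (simp add: mult.assoc)
    qed
    have coeff: "coeff p k = (\<Sum>i\<in>{i\<in>I. count (g i) T = k}. cf i * ev (g' i) ys)" for k
      unfolding p_def coeff_sum coeff_monom using Suc(2) by (simp add: sum.If_cases Int_def conj_commute)
    have "coeff p k0 = G ys" unfolding coeff G_def I'_def ..
    then have pnz: "p \<noteq> 0" using False by auto
    have "degree p \<le> k0"
    proof (rule degree_le)
      show "\<forall>i>k0. coeff p i = 0"
      proof (intro allI impI)
        fix k assume "k0 < k"
        then have "\<forall>i\<in>{i\<in>I. count (g i) T = k}. cf i = 0" using k0max by fastforce
        then show "coeff p k = 0" unfolding coeff by simp
      qed
    qed
    then show ?thesis using card_poly_roots_bound[OF pnz] False unfolding ev by simp
  qed
  define L where "L = {ys::'a list. length ys = T}"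
  have finL: "finite L" unfolding L_def using finite_lists_length_eq[of "UNIV::'a set" T] by simp
  have cardL: "card L = q ^ T" unfolding L_def q_def using card_lists_length_eq[of "UNIV::'a set" T] by simp
  have "{xs. length xs = Suc T \<and> f xs = 0} = (\<lambda>(ys,t). ys @ [t]) ` (SIGMA ys:L. {t. f (ys @ [t]) = 0})"
  proof (intro equalityI subsetI)
    fix xs assume "xs \<in> {xs. length xs = Suc T \<and> f xs = 0}"
    then have xs: "length xs = Suc T" "f xs = 0" by auto
    then have "xs = butlast xs @ [last xs]" by (metis append_butlast_last_id list.size(3) nat.distinct(1))
    then show "xs \<in> (\<lambda>(ys,t). ys @ [t]) ` (SIGMA ys:L. {t. f (ys @ [t]) = 0})"
      using xs unfolding L_def by (intro image_eqI[of _ _ "(butlast xs, last xs)"]) auto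
  qed (auto simp: L_def)
  moreover have "inj_on (\<lambda>(ys,t). ys @ [t]) (SIGMA ys:L. {t. f (ys @ [t]) = (0::'a)})"
    by (auto simp: inj_on_def)
  ultimately have "card {xs. length xs = Suc T \<and> f xs = 0} = (\<Sum>ys\<in>L. card {t. f (ys @ [t]) = 0})"
    using finL by (simp add: card_image)
  also have "\<dots> \<le> (\<Sum>ys\<in>L. (if G ys = 0 then q else k0))"
    using roots by (intro sum_mono) (auto simp: L_def)
  also have "\<dots> \<le> (\<Sum>ys\<in>L. (if G ys = 0 then q else 0) + k0)"
    by (intro sum_mono) auto
  also have "\<dots> = q * card {ys\<in>L. G ys = 0} + k0 * q ^ T"
    using finL cardL by (simp add: sum.distrib sum.If_cases Int_def)
  finally have A: "card {xs. length xs = Suc T \<and> f xs = 0} \<le> q * card {ys\<in>L. G ys = 0} + k0 * q ^ T" .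
  have B: "card {ys\<in>L. G ys = 0} * q \<le> (d - k0) * q ^ T"
    using IH unfolding G_def L_def by (simp add: conj_commute)
  have "card {xs. length xs = Suc T \<and> f xs = 0} * q \<le> (q * card {ys\<in>L. G ys = 0} + k0 * q ^ T) * q"
    using A by simp
  also have "\<dots> = q * (card {ys\<in>L. G ys = 0} * q) + k0 * q ^ T * q" by (simp add: algebra_simps)
  also have "\<dots> \<le> q * ((d - k0) * q ^ T) + k0 * q ^ T * q" using B by simp
  also have "\<dots> = d * q ^ Suc T" using \<open>k0 \<le> d\<close> by (simp add: algebra_simps diff_mult_distrib)
  finally show ?case unfolding f_def q_def .
qed


lemma LA_span:
  fixes A :: "'a::field mat"
  assumes A: "A \<in> carrier_mat N nc"
  shows "\<exists>S. S \<subseteq> set (cols A) \<and> card S = vec_space.rank N A \<and>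
    (\<forall>a. a \<in> carrier_vec N \<longrightarrow> (\<forall>u\<in>S. a \<bullet> u = 0) \<longrightarrow> (\<forall>c\<in>set (cols A). a \<bullet> c = 0))"
proof -
  interpret V: vec_space "TYPE('a)" N .
  let ?C = "set (cols A)"
  have C: "?C \<subseteq> carrier_vec N" using A cols_dim by blast
  obtain S where S: "maximal S (\<lambda>T. T \<subseteq> ?C \<and> V.lin_indpt T)"
    using maximal_exists[of "(\<lambda>T. T \<subseteq> ?C \<and> V.lin_indpt T)" "card ?C" "{}"]
    by (meson List.finite_set card_mono empty_iff empty_subsetI V.finite_lin_indpt2 rev_finite_subset)
  have rk: "V.rank A = card S" using V.rank_card_indpt[OF A S] .
  have SC: "S \<subseteq> ?C" "V.lin_indpt S" using S unfolding maximal_def by auto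
  have Cspan: "?C \<subseteq> V.span S"
  proof
    fix c assume c: "c \<in> ?C"
    show "c \<in> V.span S"
    proof (rule ccontr)
      assume nc: "c \<notin> V.span S"
      have "c \<notin> S" using nc V.in_own_span[of S] SC C by auto
      have "V.lin_indpt (S \<union> {c})" using V.lin_dep_iff_in_span[of S c] SC C c \<open>c\<notin>S\<close> nc by auto
      then have "S \<union> {c} = S" using S c SC unfolding maximal_def by blast
      then show False using \<open>c \<notin> S\<close> by auto
    qed
  qed
  have ann: "\<forall>c\<in>?C. a \<bullet> c = 0" if a: "a \<in> carrier_vec N" "\<forall>u\<in>S. a \<bullet> u = 0" for a
  proof -
    let ?W = "{v \<in> carrier_vec N. a \<bullet> v = 0}"
    have sub: "LinearCombinations.submodule class_ring ?W (module_vec TYPE('a) N)"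
      unfolding LinearCombinations.submodule_def
      using a(1) V.module_axioms
      by (auto simp: module_vec_simps scalar_prod_add_distrib[of _ N])
    have "V.span S \<subseteq> ?W" using V.span_is_subset[OF _ sub] a SC C by auto
    then show ?thesis using Cspan by auto
  qed
  show ?thesis
  proof (intro exI[of _ S] conjI allI impI)
    show "S \<subseteq> set (cols A)" by (rule SC(1))
    show "card S = vec_space.rank N A" using rk by simp
    fix a assume "a \<in> carrier_vec N" "\<forall>u\<in>S. a \<bullet> u = 0"
    then show "\<forall>c\<in>set (cols A). a \<bullet> c = 0" by (rule ann)
  qed
qed

lemma bij_lv: "bij_betw list_of_vec (carrier_vec N :: 'a vec set) {xs. set xs \<subseteq> UNIV \<and> length xs = N}"
proof (rule bij_betw_byWitness[where f' = vec_of_list])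
  show "\<forall>a\<in>carrier_vec N. vec_of_list (list_of_vec a) = a" by (simp add: vec_list)
  show "\<forall>a'\<in>{xs. set xs \<subseteq> UNIV \<and> length xs = N}. list_of_vec (vec_of_list a') = a'" by (simp add: list_vec)
  show "list_of_vec ` carrier_vec N \<subseteq> {xs. set xs \<subseteq> UNIV \<and> length xs = N}" by auto
  show "vec_of_list ` {xs. set xs \<subseteq> UNIV \<and> length xs = N} \<subseteq> (carrier_vec N :: 'a vec set)"
    by (auto intro: carrier_vecI)
qed

lemma card_carrier_vec: "card (carrier_vec N :: 'a::finite vec set) = CARD('a) ^ N"
proof -
  have "card (carrier_vec N :: 'a vec set) = card {xs::'a list. set xs \<subseteq> UNIV \<and> length xs = N}"
    by (rule bij_betw_same_card[OF bij_lv])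
  also have "\<dots> = CARD('a) ^ N" by (rule card_lists_length_eq) simp
  finally show ?thesis .
qed

lemma fin_carrier_vec: "finite (carrier_vec N :: 'a::finite vec set)"
proof -
  have "finite {xs::'a list. set xs \<subseteq> UNIV \<and> length xs = N}" by (rule finite_lists_length_eq) simp
  then show ?thesis using bij_betw_finite[OF bij_lv] by blast
qed

lemma ann_count:
  fixes S :: "'a::{finite,field} vec set"
  assumes "finite S" "S \<subseteq> carrier_vec N"
  shows "CARD('a) ^ N \<le> CARD('a) ^ card S * card {a\<in>carrier_vec N. \<forall>u\<in>S. a \<bullet> u = 0}"
proof -
  obtain ss where ss: "distinct ss" "set ss = S" using finite_distinct_list[OF assms(1)] by blast
  have lss: "length ss = card S" using ss distinct_card by fastforce
  define L where "L = {a\<in>carrier_vec N. \<forall>u\<in>S. a \<bullet> u = (0::'a)}"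
  define \<psi> where "\<psi> a = map (\<lambda>u. a \<bullet> u) ss" for a :: "'a vec"
  define rep where "rep y = (SOME b. b \<in> carrier_vec N \<and> \<psi> b = y)" for y
  define h where "h a = (\<psi> a, a - rep (\<psi> a))" for a
  have rep: "rep (\<psi> a) \<in> carrier_vec N \<and> \<psi> (rep (\<psi> a)) = \<psi> a" if "a \<in> carrier_vec N" for a
    unfolding rep_def by (rule someI[of _ a]) (use that in auto)
  have inj: "inj_on h (carrier_vec N)"
  proof (rule inj_onI)
    fix a b assume a: "a \<in> carrier_vec N" and b: "b \<in> carrier_vec N" and e: "h a = h b"
    then have "\<psi> a = \<psi> b" "a - rep (\<psi> a) = b - rep (\<psi> a)" unfolding h_def by auto
    then have eq: "a - rep (\<psi> a) = b - rep (\<psi> a)" by simp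
    have r: "rep (\<psi> a) \<in> carrier_vec N" using rep[OF a] by simp
    have "a $ i = b $ i" if "i < N" for i
      using arg_cong[OF eq, of "\<lambda>v. v $ i"] that a b r by simp
    then show "a = b" using a b by (intro eq_vecI) auto
  qed
  have img: "h ` carrier_vec N \<subseteq> {xs. set xs \<subseteq> UNIV \<and> length xs = card S} \<times> L"
  proof
    fix y assume "y \<in> h ` carrier_vec N"
    then obtain a where a: "a \<in> carrier_vec N" and y: "y = h a" by auto
    have r: "rep (\<psi> a) \<in> carrier_vec N" "\<psi> (rep (\<psi> a)) = \<psi> a" using rep[OF a] by auto
    have "\<forall>u\<in>S. (a - rep (\<psi> a)) \<bullet> u = 0"
    proof
      fix u assume u: "u \<in> S"
      then have "a \<bullet> u = rep (\<psi> a) \<bullet> u" using r(2) ss unfolding \<psi>_def by (auto simp: map_eq_conv)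
      moreover have "u \<in> carrier_vec N" using u assms(2) by auto
      ultimately show "(a - rep (\<psi> a)) \<bullet> u = 0" using minus_scalar_prod_distrib[OF a r(1)] by simp
    qed
    then show "y \<in> {xs. set xs \<subseteq> UNIV \<and> length xs = card S} \<times> L"
      unfolding y h_def L_def using a r(1) lss by (auto simp: \<psi>_def)
  qed
  have finL: "finite L" unfolding L_def by (rule finite_subset[OF _ fin_carrier_vec]) auto
  have "CARD('a) ^ N = card (carrier_vec N :: 'a vec set)" by (simp add: card_carrier_vec)
  also have "\<dots> \<le> card ({xs. set xs \<subseteq> (UNIV::'a set) \<and> length xs = card S} \<times> L)"
    by (rule card_inj_on_le[OF inj img]) (use finL finite_lists_length_eq[of "UNIV::'a set"] in auto)
  also have "\<dots> = CARD('a) ^ card S * card L"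
    using card_lists_length_eq[of "UNIV::'a set" "card S"] by (simp add: card_cartesian_product)
  finally show ?thesis unfolding L_def .
qed

lemma LA:
  fixes A :: "'a::{finite,field} mat"
  assumes A: "A \<in> carrier_mat N nc"
  shows "CARD('a) ^ (N - vec_space.rank N A) \<le> card {a\<in>carrier_vec N. \<forall>c\<in>set (cols A). a \<bullet> c = 0}"
proof -
  obtain S where S0: "S \<subseteq> set (cols A) \<and> card S = vec_space.rank N A \<and>
    (\<forall>a. a \<in> carrier_vec N \<longrightarrow> (\<forall>u\<in>S. a \<bullet> u = 0) \<longrightarrow> (\<forall>c\<in>set (cols A). a \<bullet> c = 0))"
    using LA_span[OF A] by (elim exE) 
  have S: "S \<subseteq> set (cols A)" "card S = vec_space.rank N A"
    "\<And>a. a \<in> carrier_vec N \<Longrightarrow> \<forall>u\<in>S. a \<bullet> u = 0 \<Longrightarrow> \<forall>c\<in>set (cols A). a \<bullet> c = 0"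
    using S0 by auto
  have SN1: "S \<subseteq> carrier_vec N" using S(1) cols_dim[of A] A by auto
  have SN: "S \<subseteq> carrier_vec N" "finite S" using SN1 finite_subset[OF S(1)] by auto
  define L where "L = {a\<in>carrier_vec N. \<forall>u\<in>S. a \<bullet> u = (0::'a)}"
  have LL: "L \<subseteq> {a\<in>carrier_vec N. \<forall>c\<in>set (cols A). a \<bullet> c = 0}" unfolding L_def using S(3) by auto
  have finL: "finite {a\<in>carrier_vec N. \<forall>c\<in>set (cols A). a \<bullet> c = (0::'a)}" by (rule finite_subset[OF _ fin_carrier_vec]) auto
  have c: "CARD('a) ^ N \<le> CARD('a) ^ card S * card L" using ann_count[OF SN(2,1)] unfolding L_def .
  have "CARD('a) ^ (N - card S) \<le> card L"
  proof (cases "card S \<le> N")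
    case True
    then have "CARD('a) ^ N = CARD('a) ^ card S * CARD('a) ^ (N - card S)"
      by (simp add: power_add[symmetric])
    then have "CARD('a) ^ card S * CARD('a) ^ (N - card S) \<le> CARD('a) ^ card S * card L"
      using c by (simp only:)
    moreover have "0 < CARD('a) ^ card S" by simp
    ultimately show ?thesis by (rule mult_left_le_imp_le)
  next
    case False
    have "0\<^sub>v N \<in> L" unfolding L_def using SN by auto
    moreover have "finite L" unfolding L_def by (rule finite_subset[OF _ fin_carrier_vec]) auto
    ultimately have "card L > 0" by (auto simp: card_gt_0_iff)
    then show ?thesis using False by simp
  qed
  also have "\<dots> \<le> card {a\<in>carrier_vec N. \<forall>c\<in>set (cols A). a \<bullet> c = 0}"
    by (rule card_mono[OF finL LL])
  finally show ?thesis unfolding S(2)[symmetric] .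
qed


lemma monomial_idx_Suc:
  "monomial_idx (Suc T) r = (\<lambda>(k,M). M + replicate_mset k T) ` (SIGMA k:{0..r}. monomial_idx T (r - k))"
proof (intro equalityI subsetI)
  fix M assume M: "M \<in> monomial_idx (Suc T) r"
  then have s: "set_mset M \<subseteq> {0..<Suc T}" "size M \<le> r" by (auto simp: monomial_idx_def)
  define M' where "M' = filter_mset (\<lambda>j. j < T) M"
  have "filter_mset (\<lambda>j. \<not> j < T) M = replicate_mset (count M T) T"
  proof (subst multiset_eq_iff, intro allI)
    fix x show "count (filter_mset (\<lambda>j. \<not> j < T) M) x = count (replicate_mset (count M T) T) x"
      using s(1) by (cases "x = T") (auto simp: count_eq_zero_iff)
  qed
  then have dec: "M = M' + replicate_mset (count M T) T" unfolding M'_def by (metis multiset_partition)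
  then have "size M = size M' + count M T" by (metis size_replicate_mset size_union)
  then have "M' \<in> monomial_idx T (r - count M T)" "count M T \<le> r"
    using s unfolding monomial_idx_def M'_def by auto
  then show "M \<in> (\<lambda>(k,M). M + replicate_mset k T) ` (SIGMA k:{0..r}. monomial_idx T (r - k))"
    using dec by (intro image_eqI[of _ _ "(count M T, M')"]) auto
next
  fix M assume "M \<in> (\<lambda>(k,M). M + replicate_mset k T) ` (SIGMA k:{0..r}. monomial_idx T (r - k))"
  then obtain k M' where "k \<le> r" "M' \<in> monomial_idx T (r - k)" "M = M' + replicate_mset k T" by auto
  then show "M \<in> monomial_idx (Suc T) r" unfolding monomial_idx_def by auto
qed

lemma inj_monomial_Suc:
  "inj_on (\<lambda>(k,M). M + replicate_mset k T) (SIGMA k:{0..r}. monomial_idx T (r - k))"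
proof (rule inj_onI, clarify)
  fix k M k' M'
  assume a: "M \<in> monomial_idx T (r - k)" "M' \<in> monomial_idx T (r - k')"
    and e: "M + replicate_mset k T = M' + replicate_mset k' T"
  have "T \<notin># M" "T \<notin># M'" using a unfolding monomial_idx_def by auto
  then have "count (M + replicate_mset k T) T = k" "count (M' + replicate_mset k' T) T = k'"
    by (auto simp: count_eq_zero_iff)
  then have "k = k'" using e by simp
  then show "k = k' \<and> M = M'" using e by simp
qed

lemma card_monomial_idx: "card (monomial_idx T r) = (r + T) choose r"
proof (induction T arbitrary: r)
  case 0
  have "monomial_idx 0 r = {{#}}" unfolding monomial_idx_def by auto
  then show ?case by simp
next
  case (Suc T)
  have fin: "finite (monomial_idx T j)" for j
    using Suc.IH[of j] by (metis card.infinite zero_less_binomial_iff le_add1 less_irrefl)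
  have "card (monomial_idx (Suc T) r) = card (SIGMA k:{0..r}. monomial_idx T (r - k))"
    unfolding monomial_idx_Suc by (rule card_image[OF inj_monomial_Suc])
  also have "\<dots> = (\<Sum>k\<in>{0..r}. (r - k + T) choose (r - k))"
    using fin Suc.IH by simp
  also have "\<dots> = (\<Sum>k\<in>{0..r}. (r - (r - k) + T) choose (r - (r - k)))"
    by (subst sum.atLeastAtMost_rev) simp
  also have "\<dots> = (\<Sum>k\<le>r. (T + k) choose T)"
    by (simp add: atLeast0AtMost[symmetric], intro sum.cong refl)
       (metis add.commute binomial_symmetric diff_add_inverse2 le_add2)
  also have "\<dots> = (T + r + 1) choose r" by (rule choose_rising_sum(2))
  finally show ?case by (simp add: add.commute)
qed

lemma finite_monomial_idx: "finite (monomial_idx T r)"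
  using card_monomial_idx[of T r] by (metis card.infinite zero_less_binomial_iff le_add1 less_irrefl)


lemma ml_props: "distinct (monomial_list T r) \<and> set (monomial_list T r) = monomial_idx T r"
  unfolding monomial_list_def by (rule someI_ex) (use finite_distinct_list[OF finite_monomial_idx] in blast)

lemma length_ml: "length (monomial_list T r) = (r + T) choose r"
  using ml_props[of T r] card_monomial_idx[of T r] distinct_card by metis

definition FL :: "nat \<Rightarrow> nat \<Rightarrow> 'a::comm_ring_1 vec \<Rightarrow> 'a list \<Rightarrow> 'a" where
  "FL T r a xs = (\<Sum>k\<in>{0..<length (monomial_list T r)}. a $ k * ev (monomial_list T r ! k) xs)"

lemma col_mono_power:
  fixes X :: "'a::comm_ring_1 mat"
  assumes X: "X \<in> carrier_mat T n" and j: "j < n"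
  shows "a \<bullet> col (mono_power X r) j = FL T r a (list_of_vec (col X j))"
proof -
  let ?ml = "monomial_list T r"
  have dims: "dim_row X = T" "dim_col X = n" using X by auto
  have dimA: "dim_row (mono_power X r) = length ?ml" "dim_col (mono_power X r) = n"
    unfolding mono_power_def dims by simp_all
  have entry: "col (mono_power X r) j $ k = (\<Prod>i\<in>#?ml ! k. X $$ (i, j))" if k: "k < length ?ml" for k
    using k j dimA unfolding mono_power_def mat_of_rows_def dims by simp
  have e: "ev (?ml ! k) (list_of_vec (col X j)) = (\<Prod>i\<in>#?ml ! k. X $$ (i, j))" if k: "k < length ?ml" for k
  proof -
    have "?ml ! k \<in> monomial_idx T r" using ml_props[of T r] k nth_mem by blast
    then have s: "set_mset (?ml ! k) \<subseteq> {0..<T}" unfolding monomial_idx_def by auto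
    have "image_mset (\<lambda>i. list_of_vec (col X j) ! i) (?ml ! k) = image_mset (\<lambda>i. X $$ (i, j)) (?ml ! k)"
      by (rule image_mset_cong) (use s dims j in \<open>auto simp: list_of_vec_index\<close>)
    then show ?thesis unfolding ev_def by simp
  qed
  show ?thesis unfolding FL_def scalar_prod_def
    by (rule sum.cong) (use dimA e entry in auto)
qed

lemma col_of_fun:
  assumes "f j \<in> carrier_vec T" "j < n"
  shows "col (mat T n (\<lambda>(i,j). f j $ i)) j = f j"
  using assms by (auto intro!: eq_vecI)

lemma card_cols_pred:
  fixes P :: "'a::finite vec \<Rightarrow> bool"
  shows "card {X \<in> carrier_mat T n. \<forall>j<n. P (col X j)} = card {x \<in> carrier_vec T. P x} ^ n"
proof -
  let ?A = "{X \<in> carrier_mat T n. \<forall>j<n. P (col X j)}"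
  let ?B = "PiE {0..<n} (\<lambda>_. {x \<in> carrier_vec T. P x})"
  have "bij_betw (\<lambda>X. restrict (col X) {0..<n}) ?A ?B"
  proof (rule bij_betw_byWitness[where f' = "\<lambda>f. mat T n (\<lambda>(i,j). f j $ i)"])
    show "\<forall>X\<in>?A. mat T n (\<lambda>(i,j). restrict (col X) {0..<n} j $ i) = X"
      by (auto intro!: eq_matI)
    show "\<forall>f\<in>?B. restrict (col (mat T n (\<lambda>(i,j). f j $ i))) {0..<n} = f"
    proof
      fix f assume f: "f \<in> ?B"
      show "restrict (col (mat T n (\<lambda>(i,j). f j $ i))) {0..<n} = f"
      proof (rule ext)
        fix j show "restrict (col (mat T n (\<lambda>(i,j). f j $ i))) {0..<n} j = f j"
        proof (cases "j < n")
          case True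
          then have "f j \<in> carrier_vec T" using f by auto
          then show ?thesis using True col_of_fun[of f j T n] by simp
        next
          case False then show ?thesis using f by (auto simp: PiE_def extensional_def)
        qed
      qed
    qed
    show "(\<lambda>X. restrict (col X) {0..<n}) ` ?A \<subseteq> ?B" by auto
    show "(\<lambda>f. mat T n (\<lambda>(i,j). f j $ i)) ` ?B \<subseteq> ?A"
    proof
      fix Y assume "Y \<in> (\<lambda>f. mat T n (\<lambda>(i,j). f j $ i)) ` ?B"
      then obtain f where f: "f \<in> ?B" and Y: "Y = mat T n (\<lambda>(i,j). f j $ i)" by blast
      have "\<forall>j<n. P (col Y j)"
      proof (intro allI impI)
        fix j assume j: "j < n"
        then have "f j \<in> carrier_vec T" "P (f j)" using f by auto
        then show "P (col Y j)" using col_of_fun[of f j T n] j Y by simp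
      qed
      then show "Y \<in> ?A" using Y by auto
    qed
  qed
  then have "card ?A = card ?B" by (rule bij_betw_same_card)
  also have "\<dots> = card {x \<in> carrier_vec T. P x} ^ n" by (simp add: card_PiE)
  finally show ?thesis .
qed

lemma card_carrier_mat: "card (carrier_mat T n :: 'a::finite mat set) = CARD('a) ^ (T * n)"
proof -
  have "card (carrier_mat T n :: 'a mat set) = card {X \<in> carrier_mat T n. \<forall>j<n. (\<lambda>_::'a vec. True) (col X j)}"
    by simp
  also have "\<dots> = card {x \<in> carrier_vec T. (\<lambda>_::'a vec. True) x} ^ n" by (rule card_cols_pred)
  also have "\<dots> = CARD('a) ^ (T * n)" by (simp add: card_carrier_vec power_mult)
  finally show ?thesis .
qed

lemma fin_carrier_mat: "finite (carrier_mat T n :: 'a::finite mat set)"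
  using card_carrier_mat[of T n, where 'a='a] by (intro card_ge_0_finite) simp

lemma card_lov_pred:
  fixes P :: "'a list \<Rightarrow> bool"
  shows "card {x \<in> carrier_vec T. P (list_of_vec x)} = card {xs. length xs = T \<and> P xs}"
proof -
  have "inj_on list_of_vec {x \<in> carrier_vec T. P (list_of_vec x)}"
    by (rule inj_onI) (metis vec_list)
  moreover have "list_of_vec ` {x \<in> carrier_vec T. P (list_of_vec x)} = {xs. length xs = T \<and> P xs}"
  proof (intro equalityI subsetI)
    fix xs assume "xs \<in> {xs. length xs = T \<and> P xs}"
    then show "xs \<in> list_of_vec ` {x \<in> carrier_vec T. P (list_of_vec x)}"
      by (intro image_eqI[of _ _ "vec_of_list xs"]) (auto simp: list_vec intro: carrier_vecI)
  qed auto
  ultimately show ?thesis by (metis card_image)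
qed


lemma final_real:
  fixes M N n lr lQ c SR SL :: real
  assumes lQ: "lQ > 0" and c: "c \<ge> 1" and M: "M > 0"
    and SR: "SR \<ge> M * N - (SL / c + M * (ln c - 1)) / lQ"
    and SL: "SL \<le> M * (1 + c)"
    and lc: "ln c = n * lr + (N - n) * lQ"
  shows "SR / M \<ge> n * (1 - lr / lQ) - 1 / lQ"
proof -
  have "SL / c \<le> M * (1 + c) / c" using SL c by (simp add: divide_right_mono)
  also have "\<dots> = M / c + M" using c by (simp add: field_simps)
  also have "M / c \<le> M" using c M by (simp add: divide_le_eq)
  finally have "SL / c \<le> M + M" by simp
  then have "SL / c + M * (ln c - 1) \<le> M * (1 + ln c)" by (simp add: algebra_simps)
  then have "(SL / c + M * (ln c - 1)) / lQ \<le> M * (1 + ln c) / lQ" using lQ by (simp add: divide_right_mono)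
  then have "SR \<ge> M * N - M * (1 + ln c) / lQ" using SR by linarith
  then have "SR / M \<ge> (M * N - M * (1 + ln c) / lQ) / M" using M by (simp add: divide_right_mono)
  also have "(M * N - M * (1 + ln c) / lQ) / M = N - (1 + ln c) / lQ" using M by (simp add: field_simps)
  also have "\<dots> = n * (1 - lr / lQ) - 1 / lQ" unfolding lc using lQ by (simp add: field_simps)
  finally show ?thesis .
qed

lemma sum_card_swap:
  assumes "finite A" "finite B"
  shows "(\<Sum>x\<in>A. card {y\<in>B. R x y}) = (\<Sum>y\<in>B. card {x\<in>A. R x y})"
  using sum.swap_restrict[OF assms, of "\<lambda>_ _. (1::nat)" R] by simp

lemma card_ge2: "2 \<le> CARD('a::{finite,field})"
proof -
  have "card {0::'a, 1} = 2" by simp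
  moreover have "card {0::'a, 1} \<le> CARD('a)" by (rule card_mono) auto
  ultimately show ?thesis by simp
qed


lemma Z_bound:
  fixes a :: "'a::{finite,field} vec"
  assumes a: "a \<in> carrier_vec (length (monomial_list T r))" "a \<noteq> 0\<^sub>v (length (monomial_list T r))"
  shows "card {xs. length xs = T \<and> FL T r a xs = 0} * CARD('a) \<le> r * CARD('a) ^ T"
proof -
  let ?ml = "monomial_list T r"
  obtain i0 where i0: "i0 < length ?ml" "a $ i0 \<noteq> 0"
  proof (rule ccontr)
    assume "\<not> thesis"
    then have "\<forall>i<length ?ml. a $ i = 0" using that by blast
    then have "a = 0\<^sub>v (length ?ml)" using a(1) by (intro eq_vecI) auto
    then show False using a(2) by simp
  qed
  have "card {xs. length xs = T \<and> (\<Sum>i\<in>{0..<length ?ml}. a $ i * ev (?ml ! i) xs) = 0} * CARD('a) \<le> r * CARD('a) ^ T"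
  proof (rule SZ)
    show "finite {0..<length ?ml}" by simp
    show "inj_on ((!) ?ml) {0..<length ?ml}" using ml_props[of T r] by (intro inj_on_nth) auto
    show "\<forall>i\<in>{0..<length ?ml}. set_mset (?ml ! i) \<subseteq> {0..<T} \<and> size (?ml ! i) \<le> r"
    proof
      fix i assume "i \<in> {0..<length ?ml}"
      then have "?ml ! i \<in> monomial_idx T r" using ml_props[of T r] nth_mem by fastforce
      then show "set_mset (?ml ! i) \<subseteq> {0..<T} \<and> size (?ml ! i) \<le> r" unfolding monomial_idx_def by auto
    qed
    show "i0 \<in> {0..<length ?ml}" using i0 by simp
    show "a $ i0 \<noteq> 0" by (rule i0(2))
  qed
  then show ?thesis unfolding FL_def .
qed

theorem fact4p7:
  fixes T n r :: nat
  assumes "T > 0" and "n > 0" and "r > 0"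
    and "real r ^ n * real CARD('a) powi (int ((r + T) choose r) - int n) \<ge> 1"
  shows "(\<Sum>X\<in>carrier_mat T n. real (mat_rank (mono_power (X :: 'a::{finite,field} mat) r)))
           / real (card (carrier_mat T n :: 'a mat set))
         \<ge> real n * (1 - ln (real r) / ln (real CARD('a))) - 1 / ln (real CARD('a))"
proof -
  define q where "q = CARD('a)"
  define Q where "Q = real q"
  define N where "N = length (monomial_list T r)"
  have N: "N = (r + T) choose r" unfolding N_def by (rule length_ml)
  have q2: "q \<ge> 2" unfolding q_def by (rule card_ge2)
  have Q1: "Q > 1" unfolding Q_def using q2 by simp
  have lnQ: "ln Q > 0" using Q1 by simp
  define CM where "CM = (carrier_mat T n :: 'a mat set)"
  define CV where "CV = (carrier_vec N :: 'a vec set)"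
  have finCM: "finite CM" unfolding CM_def by (rule fin_carrier_mat)
  have finCV: "finite CV" unfolding CV_def by (rule fin_carrier_vec)
  have cardCM: "card CM = q ^ (T * n)" unfolding CM_def q_def by (rule card_carrier_mat)
  have cardCV: "card CV = q ^ N" unfolding CV_def q_def by (rule card_carrier_vec)
  define R where "R X a = (\<forall>j<n. FL T r a (list_of_vec (col X j)) = 0)" for X :: "'a mat" and a
  define LX where "LX X = card {a\<in>CV. R X a}" for X
  define Z where "Z a = card {xs. length xs = T \<and> FL T r a xs = (0::'a)}" for a
  define c where "c = real r ^ n * Q powi (int N - int n)"
  have c1: "c \<ge> 1" using assms(4) unfolding c_def N Q_def q_def .
  have c_eq: "c = real r ^ n * Q ^ N / Q ^ n"
    unfolding c_def using Q1 by (simp add: power_int_diff)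
  have lc: "ln c = real n * ln (real r) + (real N - real n) * ln Q"
  proof -
    have "ln c = ln (real r ^ n) + ln (Q ^ N) - ln (Q ^ n)"
      unfolding c_eq using Q1 assms(3) by (simp add: ln_mult ln_div)
    then show ?thesis by (simp add: ln_realpow algebra_simps)
  qed
  have rank_bound: "q ^ (N - mat_rank (mono_power X r)) \<le> LX X" if X: "X \<in> CM" for X
  proof -
    have dX: "dim_row X = T" "dim_col X = n" using X unfolding CM_def by auto
    have A: "mono_power X r \<in> carrier_mat N n" unfolding mono_power_def N_def dX by (metis mat_of_rows_carrier(1) length_map)
    have rk: "mat_rank (mono_power X r) = vec_space.rank N (mono_power X r)"
      unfolding mat_rank_def using A by simp
    have cs: "set (cols (mono_power X r)) = (\<lambda>j. col (mono_power X r) j) ` {0..<n}"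
      using A by (auto simp: cols_def)
    have "{a\<in>carrier_vec N. \<forall>c\<in>set (cols (mono_power X r)). a \<bullet> c = 0} = {a\<in>CV. R X a}"
      unfolding cs R_def CV_def using col_mono_power[of X T n] X unfolding CM_def by auto
    then show ?thesis using LA[OF A] unfolding LX_def q_def rk by simp
  qed
  have swap: "(\<Sum>X\<in>CM. LX X) = (\<Sum>a\<in>CV. card {X\<in>CM. R X a})"
    unfolding LX_def by (rule sum_card_swap[OF finCM finCV])
  have colcount: "card {X\<in>CM. R X a} = Z a ^ n" for a
  proof -
    have "card {X\<in>CM. R X a} = card {x \<in> carrier_vec T. FL T r a (list_of_vec x) = 0} ^ n"
      unfolding CM_def R_def by (rule card_cols_pred)
    also have "\<dots> = Z a ^ n" unfolding Z_def using card_lov_pred[of T "\<lambda>xs. FL T r a xs = 0"] by simp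
    finally show ?thesis .
  qed
  have Zle: "real (Z a) \<le> Q ^ T" for a
  proof -
    have "Z a \<le> card {xs::'a list. set xs \<subseteq> UNIV \<and> length xs = T}"
      unfolding Z_def by (rule card_mono) (use finite_lists_length_eq[of "UNIV::'a set" T] in auto)
    also have "\<dots> = q ^ T" unfolding q_def by (rule card_lists_length_eq) simp
    finally show ?thesis unfolding Q_def by (metis of_nat_le_iff of_nat_power)
  qed
  have Zle2: "real (Z a) \<le> real r * Q ^ T / Q" if "a \<in> CV" "a \<noteq> 0\<^sub>v N" for a
  proof -
    have "Z a * q \<le> r * q ^ T" using Z_bound[of a T r] that unfolding Z_def CV_def N_def q_def by simp
    then have "real (Z a) * Q \<le> real r * Q ^ T" unfolding Q_def by (metis of_nat_le_iff of_nat_mult of_nat_power)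
    then show ?thesis using Q1 by (simp add: pos_le_divide_eq)
  qed
  have zero: "0\<^sub>v N \<in> CV" unfolding CV_def by simp
  have SL: "(\<Sum>X\<in>CM. real (LX X)) \<le> real (card CM) * (1 + c)"
  proof -
    have "(\<Sum>X\<in>CM. real (LX X)) = (\<Sum>a\<in>CV. real (Z a) ^ n)"
    proof -
      have "(\<Sum>X\<in>CM. real (LX X)) = real (\<Sum>X\<in>CM. LX X)" by simp
      also have "\<dots> = real (\<Sum>a\<in>CV. Z a ^ n)" unfolding swap colcount ..
      also have "\<dots> = (\<Sum>a\<in>CV. real (Z a) ^ n)" by simp
      finally show ?thesis .
    qed
    also have "\<dots> = real (Z (0\<^sub>v N)) ^ n + (\<Sum>a\<in>CV - {0\<^sub>v N}. real (Z a) ^ n)"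
      using finCV zero by (simp add: sum.remove)
    also have "\<dots> \<le> (Q ^ T) ^ n + (\<Sum>a\<in>CV - {0\<^sub>v N}. (real r * Q ^ T / Q) ^ n)"
    proof (intro add_mono sum_mono power_mono)
      show "real (Z (0\<^sub>v N)) \<le> Q ^ T" by (rule Zle)
      fix a assume "a \<in> CV - {0\<^sub>v N}"
      then show "real (Z a) \<le> real r * Q ^ T / Q" using Zle2 by auto
    qed auto
    also have "\<dots> \<le> (Q ^ T) ^ n + real (card CV) * (real r * Q ^ T / Q) ^ n"
    proof -
      have "(\<Sum>a\<in>CV - {0\<^sub>v N}. (real r * Q ^ T / Q) ^ n) = real (card (CV - {0\<^sub>v N})) * (real r * Q ^ T / Q) ^ n"
        by simp
      also have "\<dots> \<le> real (card CV) * (real r * Q ^ T / Q) ^ n"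
        using Q1 finCV by (intro mult_right_mono) (auto intro: card_mono)
      finally show ?thesis by simp
    qed
    also have "\<dots> = real (card CM) * (1 + c)"
      unfolding cardCM cardCV c_eq Q_def using Q1 unfolding Q_def
      by (simp add: field_simps power_mult_distrib power_mult)
    finally show ?thesis .
  qed
  have perX: "real (mat_rank (mono_power X r)) \<ge> real N - (real (LX X) / c + ln c - 1) / ln Q"
    if X: "X \<in> CM" for X
  proof -
    define rk where "rk = mat_rank (mono_power X r)"
    have b: "q ^ (N - rk) \<le> LX X" using rank_bound[OF X] unfolding rk_def .
    have Qp: "Q ^ (N - rk) \<le> real (LX X)" using b unfolding Q_def by (metis of_nat_le_iff of_nat_power)
    have Lpos: "real (LX X) > 0" using Qp Q1 by (smt (verit) zero_less_power)
    have "real (N - rk) * ln Q = ln (Q ^ (N - rk))" by (simp add: ln_realpow)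
    also have "\<dots> \<le> ln (real (LX X))" using Qp Q1 Lpos by simp
    also have "ln (real (LX X)) = ln (real (LX X) / c) + ln c" using Lpos c1 by (simp add: ln_div)
    also have "\<dots> \<le> (real (LX X) / c - 1) + ln c" using Lpos c1 by (simp add: ln_le_minus_one)
    finally have i: "real (N - rk) * ln Q \<le> real (LX X) / c + ln c - 1" by simp
    have "real N - real rk \<le> real (N - rk)" by (cases "rk \<le> N") (auto simp: of_nat_diff)
    then have "(real N - real rk) * ln Q \<le> real (LX X) / c + ln c - 1"
      using i lnQ by (smt (verit) mult_right_mono)
    then have "real N - real rk \<le> (real (LX X) / c + ln c - 1) / ln Q"
      using lnQ by (simp add: pos_le_divide_eq)
    then show ?thesis unfolding rk_def by simp
  qed
  have SR: "(\<Sum>X\<in>CM. real (mat_rank (mono_power X r))) \<ge>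
      real (card CM) * real N - ((\<Sum>X\<in>CM. real (LX X)) / c + real (card CM) * (ln c - 1)) / ln Q"
  proof -
    have "(\<Sum>X\<in>CM. real (mat_rank (mono_power X r))) \<ge> (\<Sum>X\<in>CM. real N - (real (LX X) / c + ln c - 1) / ln Q)"
      using perX by (intro sum_mono) auto
    also have "(\<Sum>X\<in>CM. real N - (real (LX X) / c + ln c - 1) / ln Q) =
       (\<Sum>X\<in>CM. real N - real (LX X) * (1 / (c * ln Q)) - (ln c - 1) / ln Q)"
      using lnQ c1 by (intro sum.cong refl) (simp add: field_simps)
    also have "\<dots> = real (card CM) * real N - (\<Sum>X\<in>CM. real (LX X)) * (1 / (c * ln Q)) - real (card CM) * ((ln c - 1) / ln Q)"
      by (simp add: sum_subtractf sum_distrib_right sum_divide_distrib)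
    also have "\<dots> = real (card CM) * real N - ((\<Sum>X\<in>CM. real (LX X)) / c + real (card CM) * (ln c - 1)) / ln Q"
      using lnQ c1 by (simp add: field_simps)
    finally show ?thesis .
  qed
  have Mpos: "real (card CM) > 0" using cardCM q2 by simp
  have "(\<Sum>X\<in>CM. real (mat_rank (mono_power X r))) / real (card CM)
      \<ge> real n * (1 - ln (real r) / ln Q) - 1 / ln Q"
    by (rule final_real[OF lnQ c1 Mpos SR SL lc])
  then show ?thesis unfolding CM_def Q_def q_def .
qed


end
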